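(* Let $G$ be an influence graph that is a directed line on nodes $\{1,\dots,n\}$ with edges $(i+1,i)$ for $i=1,\dots,n-1$ (so node $i$ is the $(i-1)$-th predecessor of node $1$). For each $i$ let $p_i=\prod_{j=1}^{i-1}p_{(j+1,j)}$ be the probability that node $i$ reaches node $1$ in the live-edge graph (so $p_1=1$), and set $p_{n+1}=0$. Then for every $(x_1,\dots,x_n)\in[0,1]^n$ and every $i\in\{1,\dots,n\}$, $$f^{+}_1(x_1,\dots,x_n)\le\sum_{j=1}^{i}x_jp_j+p_{i+1}.$$
   Context: IC model: each edge $e$ has probability $p_e\in[0,1]$; a realization (live-edge graph) $\phi$ contains each edge independently with probability $p_e$, with distribution $\mathcal{P}$. $\Gamma(S,\phi)$ is the set of nodes reachable from $S$ in $\phi$. Full-adoption feedback: selecting $u$ as a seed reveals the status of all out-going edges of every node reachable from $u$ in $\phi$. An adaptive policy $\pi$ maps the observations so far (seeds selected and their feedback) to the next node to select; $V(\pi,\phi)$ is its seed set under $\phi$. For a node $u$, $\sigma_u(\pi)=\Pr_{\Phi\sim\mathcal{P}}[u\in\Gamma(V(\pi,\Phi),\Phi)]$, and $f^{+}_u(x_1,\dots,x_n)=\sup_\pi\{\sigma_u(\pi):\Pr_{\Phi\sim\mathcal{P}}[i\in V(\pi,\Phi)]=x_i\ \forall i\in[n]\}$. (In the paper this line arises as the set of predecessors of a node in an out-arborescence; other nodes are irrelevant.) *)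

theory Defs
  imports Complex_Main "HOL-Library.Extended_Real"
begin

text \<open>Directed line on nodes 1..n with edges (j+1, j), j = 1..n-1.
  A realization (live-edge graph) is encoded as phi :: nat => bool, where
  phi j means that edge (j+1, j) is live; realizations are false outside {1..<n}.
  Edge probabilities: q j = p_{(j+1,j)}.\<close>

definition realizations :: "nat \<Rightarrow> (nat \<Rightarrow> bool) set" where
  "realizations n = {phi. \<forall>j. phi j \<longrightarrow> j \<in> {1..<n}}"

definition real_weight :: "nat \<Rightarrow> (nat \<Rightarrow> real) \<Rightarrow> (nat \<Rightarrow> bool) \<Rightarrow> real" where
  "real_weight n q phi = (\<Prod>j\<in>{1..<n}. if phi j then q j else 1 - q j)"

definition prob_ev :: "nat \<Rightarrow> (nat \<Rightarrow> real) \<Rightarrow> ((nat \<Rightarrow> bool) \<Rightarrow> bool) \<Rightarrow> real" where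
  "prob_ev n q E = (\<Sum>phi\<in>realizations n. real_weight n q phi * (if E phi then 1 else 0))"

definition reach :: "nat \<Rightarrow> (nat \<Rightarrow> bool) \<Rightarrow> nat set" where
  "reach u phi = {v. 1 \<le> v \<and> v \<le> u \<and> (\<forall>j. v \<le> j \<and> j < u \<longrightarrow> phi j)}"

definition reach_set :: "nat set \<Rightarrow> (nat \<Rightarrow> bool) \<Rightarrow> nat set" where
  "reach_set S phi = (\<Union>u\<in>S. reach u phi)"

text \<open>Full-adoption feedback of seed u: status of every out-going edge of every node
  reachable from u (the out-going edge of node w >= 2 is (w, w-1), i.e. index w-1);
  unrevealed edges are None.\<close>
definition feedback :: "nat \<Rightarrow> (nat \<Rightarrow> bool) \<Rightarrow> (nat \<Rightarrow> bool option)" where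
  "feedback u phi = (\<lambda>j. if 1 \<le> j \<and> j + 1 \<in> reach u phi then Some (phi j) else None)"

type_synonym history = "(nat \<times> (nat \<Rightarrow> bool option)) list"

text \<open>An adaptive policy maps the observations so far (seeds and their feedback)
  to the next node to select, or None to stop.\<close>
type_synonym policy = "history \<Rightarrow> nat option"

definition valid_policy :: "nat \<Rightarrow> policy \<Rightarrow> bool" where
  "valid_policy n pol = (\<forall>h u. pol h = Some u \<longrightarrow> u \<in> {1..n})"

fun run :: "policy \<Rightarrow> (nat \<Rightarrow> bool) \<Rightarrow> nat \<Rightarrow> history" where
  "run pol phi 0 = []"
| "run pol phi (Suc k) = (case pol (run pol phi k) of
      None \<Rightarrow> run pol phi k
    | Some u \<Rightarrow> run pol phi k @ [(u, feedback u phi)])"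

definition seeds :: "policy \<Rightarrow> (nat \<Rightarrow> bool) \<Rightarrow> nat set" where
  "seeds pol phi = {u. \<exists>k. pol (run pol phi k) = Some u}"

definition sigma_node :: "nat \<Rightarrow> (nat \<Rightarrow> real) \<Rightarrow> nat \<Rightarrow> policy \<Rightarrow> real" where
  "sigma_node n q v pol = prob_ev n q (\<lambda>phi. v \<in> reach_set (seeds pol phi) phi)"

definition fplus :: "nat \<Rightarrow> (nat \<Rightarrow> real) \<Rightarrow> nat \<Rightarrow> (nat \<Rightarrow> real) \<Rightarrow> ereal" where
  "fplus n q v x = Sup {ereal (sigma_node n q v pol) | pol. valid_policy n pol \<and>
      (\<forall>i\<in>{1..n}. prob_ev n q (\<lambda>phi. i \<in> seeds pol phi) = x i)}"

definition preach :: "nat \<Rightarrow> (nat \<Rightarrow> real) \<Rightarrow> nat \<Rightarrow> real" where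
  "preach n q i = (if i = n + 1 then 0 else (\<Prod>j\<in>{1..<i}. q j))"

end

theory Submission
  imports Defs
begin

lemma fin_sets: "finite A \<Longrightarrow> finite {phi::nat\<Rightarrow>bool. \<forall>j. phi j \<longrightarrow> j \<in> A}"
proof -
  assume A: "finite A"
  have "{phi::nat\<Rightarrow>bool. \<forall>j. phi j \<longrightarrow> j \<in> A} \<subseteq> (\<lambda>S j. j \<in> S) ` Pow A"
  proof
    fix phi :: "nat \<Rightarrow> bool" assume "phi \<in> {phi. \<forall>j. phi j \<longrightarrow> j \<in> A}"
    then have "{j. phi j} \<in> Pow A" by auto
    moreover have "phi = (\<lambda>j. j \<in> {j. phi j})" by auto
    ultimately show "phi \<in> (\<lambda>S j. j \<in> S) ` Pow A" by blast
  qed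
  then show ?thesis by (rule finite_subset) (use A in auto)
qed

lemma fin_real: "finite (realizations n)"
  unfolding realizations_def by (rule fin_sets) auto

lemma weight_nonneg:
  assumes "\<forall>j\<in>{1..<n}. 0 \<le> q j \<and> q j \<le> 1"
  shows "0 \<le> real_weight n q phi"
  unfolding real_weight_def using assms by (intro prod_nonneg) auto

lemma prob_mono:
  assumes "\<forall>j\<in>{1..<n}. 0 \<le> q j \<and> q j \<le> 1"
    and "\<forall>phi\<in>realizations n. E phi \<longrightarrow> F phi"
  shows "prob_ev n q E \<le> prob_ev n q F"
  unfolding prob_ev_def
  apply (rule sum_mono)
  using weight_nonneg[OF assms(1)] assms(2) by auto

lemma prob_union:
  assumes q: "\<forall>j\<in>{1..<n}. 0 \<le> q j \<and> q j \<le> 1" and U: "finite U"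
  shows "prob_ev n q (\<lambda>phi. (\<exists>u\<in>U. E u phi) \<or> F phi)
     \<le> (\<Sum>u\<in>U. prob_ev n q (E u)) + prob_ev n q F"
proof -
  have "prob_ev n q (\<lambda>phi. (\<exists>u\<in>U. E u phi) \<or> F phi) \<le>
    (\<Sum>phi\<in>realizations n. (\<Sum>u\<in>U. real_weight n q phi * (if E u phi then 1 else 0))
        + real_weight n q phi * (if F phi then 1 else 0))"
    unfolding prob_ev_def
  proof (rule sum_mono)
    fix phi
    have w: "0 \<le> real_weight n q phi" by (rule weight_nonneg[OF q])
    have ind: "(if (\<exists>u\<in>U. E u phi) \<or> F phi then 1 else 0)
        \<le> (\<Sum>u\<in>U. (if E u phi then 1 else 0)) + (if F phi then 1 else (0::real))"
    proof (cases "F phi")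
      case True then show ?thesis by (simp add: sum_nonneg)
    next
      case False
      show ?thesis
      proof (cases "\<exists>u\<in>U. E u phi")
        case True then obtain u where u: "u\<in>U" "E u phi" by blast
        then have "(if E u phi then 1 else 0) \<le> (\<Sum>u\<in>U. (if E u phi then 1 else (0::real)))"
          by (intro member_le_sum) (auto simp: U)
        with True False u show ?thesis by simp
      next
        case False2: False
        then show ?thesis using False by (simp add: sum_nonneg)
      qed
    qed
    have "real_weight n q phi * (if (\<exists>u\<in>U. E u phi) \<or> F phi then 1 else 0)
      \<le> real_weight n q phi * ((\<Sum>u\<in>U. (if E u phi then 1 else 0)) + (if F phi then 1 else (0::real)))"
      by (rule mult_left_mono[OF ind w])
    then show "real_weight n q phi * (if (\<exists>u\<in>U. E u phi) \<or> F phi then 1 else 0)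
      \<le> (\<Sum>u\<in>U. real_weight n q phi * (if E u phi then 1 else 0))
        + real_weight n q phi * (if F phi then 1 else 0)"
      by (simp only: distrib_left sum_distrib_left)
  qed
  also have "\<dots> = (\<Sum>u\<in>U. prob_ev n q (E u)) + prob_ev n q F"
    unfolding prob_ev_def sum.distrib by (subst sum.swap) simp
  finally show ?thesis .
qed

lemma mass_gen:
  assumes "finite A"
  shows "(\<Sum>phi\<in>{phi::nat\<Rightarrow>bool. \<forall>j. phi j \<longrightarrow> j \<in> A}. \<Prod>j\<in>A. if phi j then q j else 1 - q j) = (1::real)"
  using assms
proof (induction A rule: finite_induct)
  case empty
  have "{phi::nat\<Rightarrow>bool. \<forall>j. phi j \<longrightarrow> j \<in> {}} = {\<lambda>_. False}" by auto
  then show ?case by simp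
next
  case (insert a A)
  define S where "S = {phi::nat\<Rightarrow>bool. \<forall>j. phi j \<longrightarrow> j \<in> A}"
  define f where "f = (\<lambda>phi::nat\<Rightarrow>bool. \<Prod>j\<in>insert a A. if phi j then q j else 1 - q j)"
  define up where "up = (\<lambda>phi::nat\<Rightarrow>bool. phi(a:=True))"
  have a: "phi \<in> S \<Longrightarrow> \<not> phi a" for phi using insert.hyps(2) S_def by auto
  have eq: "{phi. \<forall>j. phi j \<longrightarrow> j \<in> insert a A} = S \<union> up ` S"
  proof
    show "{phi. \<forall>j. phi j \<longrightarrow> j \<in> insert a A} \<subseteq> S \<union> up ` S"
    proof
      fix phi assume h: "phi \<in> {phi. \<forall>j. phi j \<longrightarrow> j \<in> insert a A}"
      show "phi \<in> S \<union> up ` S"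
      proof (cases "phi a")
        case True
        have "phi(a:=False) \<in> S" using h by (auto simp: S_def)
        moreover have "phi = up (phi(a:=False))" using True by (simp add: up_def fun_eq_iff)
        ultimately show ?thesis by blast
      next
        case False then have "phi \<in> S" using h by (auto simp: S_def)
        then show ?thesis by blast
      qed
    qed
    show "S \<union> up ` S \<subseteq> {phi. \<forall>j. phi j \<longrightarrow> j \<in> insert a A}" by (auto simp: S_def up_def split: if_splits)
  qed
  have disj: "S \<inter> up ` S = {}" using a by (auto simp: up_def) (metis fun_upd_same)
  have inj: "inj_on up S"
    unfolding inj_on_def
  proof (intro ballI impI)
    fix phi psi assume p: "phi \<in> S" "psi \<in> S" and e: "up phi = up psi"
    show "phi = psi"
    proof
      fix j show "phi j = psi j" using a[OF p(1)] a[OF p(2)] fun_cong[OF e, of j]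
        by (cases "j = a") (auto simp: up_def)
    qed
  qed
  have finS: "finite S" unfolding S_def by (rule fin_sets[OF insert.hyps(1)])
  have f1: "f phi = (1 - q a) * (\<Prod>j\<in>A. if phi j then q j else 1 - q j)" if "phi \<in> S" for phi
    unfolding f_def using a[OF that] insert.hyps by simp
  have f2: "f (up phi) = q a * (\<Prod>j\<in>A. if phi j then q j else 1 - q j)" for phi
  proof -
    have "(\<Prod>j\<in>A. if up phi j then q j else 1 - q j) = (\<Prod>j\<in>A. if phi j then q j else 1 - q j)"
      using insert.hyps(2) by (intro prod.cong) (auto simp: up_def)
    then show ?thesis unfolding f_def using insert.hyps by (simp add: up_def)
  qed
  have "sum f (S \<union> up ` S) = sum f S + sum f (up ` S)"
    by (rule sum.union_disjoint) (use finS disj in auto)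
  also have "sum f (up ` S) = sum (f \<circ> up) S" by (rule sum.reindex[OF inj])
  also have "sum f S = (1 - q a) * 1"
    using insert.IH unfolding S_def[symmetric] by (simp add: f1 sum_distrib_left[symmetric] cong: sum.cong)
  also have "sum (f \<circ> up) S = q a * 1"
    using insert.IH unfolding S_def[symmetric] by (simp add: f2 sum_distrib_left[symmetric])
  finally show ?case unfolding eq[symmetric] f_def by simp
qed

lemma mass: "prob_ev n q (\<lambda>_. True) = 1"
  unfolding prob_ev_def real_weight_def realizations_def using mass_gen[of "{1..<n}" q] by simp

lemma edge_indep:
  assumes j: "j \<in> {1..<n}" and inv: "\<And>phi b. C (phi(j:=b)) = C phi"
  shows "prob_ev n q (\<lambda>phi. C phi \<and> phi j) = q j * prob_ev n q C"
proof -
  define fl where "fl = (\<lambda>phi::nat\<Rightarrow>bool. phi(j := \<not> phi j))"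
  define W where "W = (\<lambda>phi::nat\<Rightarrow>bool. \<Prod>k\<in>{1..<n}-{j}. if phi k then q k else 1 - q k)"
  let ?R = "realizations n"
  have wsplit: "real_weight n q phi = (if phi j then q j else 1 - q j) * W phi" for phi
    unfolding real_weight_def W_def using j by (subst prod.remove[of _ j]) auto
  have Wfl: "W (fl phi) = W phi" for phi unfolding W_def fl_def by (intro prod.cong) auto
  have flj: "fl phi j = (\<not> phi j)" for phi unfolding fl_def by simp
  have flfl: "fl (fl phi) = phi" for phi unfolding fl_def by auto
  have flR: "phi \<in> ?R \<Longrightarrow> fl phi \<in> ?R" for phi using j unfolding fl_def realizations_def by auto
  have bij: "bij_betw fl ?R ?R"
    by (rule bij_betw_byWitness[where f'=fl]) (use flfl flR in auto)
  define g where "g = (\<lambda>phi. real_weight n q phi * ((if C phi \<and> phi j then 1 else 0) - q j * (if C phi then 1 else 0)))"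
  have Cfl: "C (fl phi) = C phi" for phi unfolding fl_def by (rule inv)
  have gz: "g phi + g (fl phi) = 0" for phi
    unfolding g_def wsplit Wfl Cfl flj by (cases "phi j"; simp add: algebra_simps)
  have "sum (\<lambda>x. g (fl x)) ?R = sum g ?R" by (rule sum.reindex_bij_betw[OF bij])
  then have "2 * sum g ?R = sum (\<lambda>x. g x + g (fl x)) ?R" by (simp add: sum.distrib)
  then have g0: "sum g ?R = 0" using gz by simp
  have "prob_ev n q (\<lambda>phi. C phi \<and> phi j) - q j * prob_ev n q C = sum g ?R"
    unfolding prob_ev_def g_def by (simp add: sum_distrib_left sum_subtractf[symmetric] algebra_simps)
  then show ?thesis using g0 by simp
qed

definition path :: "nat \<Rightarrow> (nat \<Rightarrow> bool) \<Rightarrow> bool" where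
  "path m phi = (\<forall>j. 1 \<le> j \<and> j < m \<longrightarrow> phi j)"

lemma path_indep:
  assumes "m \<le> n" and "\<And>phi j b. j \<in> {1..<m} \<Longrightarrow> C (phi(j:=b)) = C phi"
  shows "prob_ev n q (\<lambda>phi. C phi \<and> path m phi) = prob_ev n q C * (\<Prod>j\<in>{1..<m}. q j)"
  using assms
proof (induction m)
  case 0
  then show ?case by (simp add: path_def)
next
  case (Suc m)
  show ?case
  proof (cases "m = 0")
    case True
    then show ?thesis by (simp add: path_def)
  next
    case False
    have e: "(\<lambda>phi. C phi \<and> path (Suc m) phi) = (\<lambda>phi. (C phi \<and> path m phi) \<and> phi m)"
      using False by (auto simp: path_def less_Suc_eq)
    have IH: "prob_ev n q (\<lambda>phi. C phi \<and> path m phi) = prob_ev n q C * (\<Prod>j\<in>{1..<m}. q j)"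
      using Suc.prems by (intro Suc.IH) auto
    have "prob_ev n q (\<lambda>phi. (C phi \<and> path m phi) \<and> phi m) = q m * prob_ev n q (\<lambda>phi. C phi \<and> path m phi)"
    proof (rule edge_indep)
      show "m \<in> {1..<n}" using False Suc.prems by auto
      fix phi b
      have "C (phi(m:=b)) = C phi" using False by (intro Suc.prems(2)) auto
      moreover have "path m (phi(m:=b)) = path m phi" by (auto simp: path_def)
      ultimately show "(C (phi(m:=b)) \<and> path m (phi(m:=b))) = (C phi \<and> path m phi)" by simp
    qed
    moreover have "{1..<Suc m} = insert m {1..<m}" using False by auto
    ultimately show ?thesis using e IH by simp
  qed
qed

definition Cu :: "policy \<Rightarrow> nat \<Rightarrow> (nat \<Rightarrow> bool) \<Rightarrow> bool" where
  "Cu pol u phi = (\<exists>k. pol (run pol phi k) = Some u \<and>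
     (\<forall>k'<k. \<forall>w. pol (run pol phi k') = Some w \<longrightarrow> reach w phi \<inter> {1..u} = {}))"

lemma reach_eq:
  assumes u: "1 \<le> u" and agree: "\<forall>j\<ge>u. phi j = phi' j" and av: "reach w phi \<inter> {1..u} = {}"
  shows "reach w phi = reach w phi'"
proof -
  have av': "reach w phi' \<inter> {1..u} = {}"
  proof (rule ccontr)
    assume "reach w phi' \<inter> {1..u} \<noteq> {}"
    then obtain v where v0: "v \<in> reach w phi'" "v \<in> {1..u}" by blast
    then have v: "1 \<le> v" "v \<le> u" "v \<le> w" "\<forall>j. v \<le> j \<and> j < w \<longrightarrow> phi' j"
      unfolding reach_def by auto
    show False
    proof (cases "w \<le> u")
      case True
      then have "w \<in> reach w phi" "w \<in> {1..u}" using v unfolding reach_def by auto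
      then show False using av by blast
    next
      case False
      have "\<forall>j. u \<le> j \<and> j < w \<longrightarrow> phi j"
      proof (intro allI impI)
        fix j assume j: "u \<le> j \<and> j < w"
        then have "phi' j" using v by simp
        then show "phi j" using agree j by simp
      qed
      then have "u \<in> reach w phi" using u False unfolding reach_def by simp
      then show False using av u by auto
    qed
  qed
  show ?thesis
  proof
    show "reach w phi \<subseteq> reach w phi'"
    proof
      fix v assume h: "v \<in> reach w phi"
      then have v1: "1 \<le> v" "v \<le> w" "\<forall>j. v \<le> j \<and> j < w \<longrightarrow> phi j" unfolding reach_def by auto
      have "v \<notin> {1..u}" using h av by blast
      then have "v > u" using v1 by simp
      then have "\<forall>j. v \<le> j \<and> j < w \<longrightarrow> phi' j" using v1 agree by auto
      then show "v \<in> reach w phi'" using v1 unfolding reach_def by simp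
    qed
    show "reach w phi' \<subseteq> reach w phi"
    proof
      fix v assume h: "v \<in> reach w phi'"
      then have v1: "1 \<le> v" "v \<le> w" "\<forall>j. v \<le> j \<and> j < w \<longrightarrow> phi' j" unfolding reach_def by auto
      have "v \<notin> {1..u}" using h av' by blast
      then have "v > u" using v1 by simp
      then have "\<forall>j. v \<le> j \<and> j < w \<longrightarrow> phi j" using v1 agree by auto
      then show "v \<in> reach w phi" using v1 unfolding reach_def by simp
    qed
  qed
qed

lemma run_eq:
  assumes u: "1 \<le> u" and agree: "\<forall>j\<ge>u. phi j = phi' j"
    and av: "\<forall>k'<K. \<forall>w. pol (run pol phi k') = Some w \<longrightarrow> reach w phi \<inter> {1..u} = {}"
  shows "k \<le> K \<Longrightarrow> run pol phi k = run pol phi' k"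
proof (induction k)
  case 0
  then show ?case by simp
next
  case (Suc k)
  then have eq: "run pol phi k = run pol phi' k" by simp
  show ?case
  proof (cases "pol (run pol phi k)")
    case None
    then show ?thesis using eq by simp
  next
    case (Some w)
    have kK: "k < K" using Suc.prems by simp
    have a: "reach w phi \<inter> {1..u} = {}" using av kK Some by blast
    have r: "reach w phi = reach w phi'" by (rule reach_eq[OF u agree a])
    have "feedback w phi = feedback w phi'"
    proof
      fix j
      show "feedback w phi j = feedback w phi' j"
      proof (cases "1 \<le> j \<and> j + 1 \<in> reach w phi")
        case True
        then have "j \<ge> u" using a by auto
        then show ?thesis using True r agree by (simp add: feedback_def)
      next
        case False
        then show ?thesis unfolding feedback_def using r by auto
      qed
    qed
    then show ?thesis using eq Some by simp
  qed
qed

lemma Cu_inv1: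
  assumes u: "1 \<le> u" and agree: "\<forall>j\<ge>u. phi j = phi' j" and c: "Cu pol u phi"
  shows "Cu pol u phi'"
proof -
  obtain K where K: "pol (run pol phi K) = Some u"
    and av: "\<forall>k'<K. \<forall>w. pol (run pol phi k') = Some w \<longrightarrow> reach w phi \<inter> {1..u} = {}"
    using c unfolding Cu_def by blast
  have re: "k \<le> K \<Longrightarrow> run pol phi k = run pol phi' k" for k by (rule run_eq[OF u agree av])
  show ?thesis unfolding Cu_def
  proof (intro exI conjI allI impI)
    show "pol (run pol phi' K) = Some u" using K re[of K] by simp
    fix k' w assume k': "k' < K" and s: "pol (run pol phi' k') = Some w"
    then have s': "pol (run pol phi k') = Some w" using re[of k'] by simp
    then have a: "reach w phi \<inter> {1..u} = {}" using av k' by blast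
    then show "reach w phi' \<inter> {1..u} = {}" using reach_eq[OF u agree a] by simp
  qed
qed

lemma Cu_inv:
  assumes u: "1 \<le> u" and j: "j < u"
  shows "Cu pol u (phi(j:=b)) = Cu pol u phi"
proof
  have ag: "\<forall>j'\<ge>u. phi j' = (phi(j:=b)) j'" using j by auto
  show "Cu pol u (phi(j:=b)) \<Longrightarrow> Cu pol u phi"
    by (rule Cu_inv1[OF u]) (use ag in auto)
  show "Cu pol u phi \<Longrightarrow> Cu pol u (phi(j:=b))"
    by (rule Cu_inv1[OF u ag])
qed

lemma cover:
  assumes v: "valid_policy n pol" and h: "1 \<in> reach_set (seeds pol phi) phi"
  shows "\<exists>u\<in>{1..n}. Cu pol u phi \<and> path u phi"
proof -
  define P where "P = (\<lambda>k. \<exists>u. pol (run pol phi k) = Some u \<and> 1 \<in> reach u phi)"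
  have "\<exists>k. P k" using h unfolding P_def reach_set_def seeds_def by blast
  then obtain k where Pk: "P k" and min: "\<forall>m<k. \<not> P m" using exists_least_iff[of P] by blast
  then obtain u where s: "pol (run pol phi k) = Some u" and r: "1 \<in> reach u phi"
    unfolding P_def by blast
  have un: "u \<in> {1..n}" using v s unfolding valid_policy_def by blast
  have pu: "\<forall>j. 1 \<le> j \<and> j < u \<longrightarrow> phi j" using r by (auto simp: reach_def)
  have "Cu pol u phi" unfolding Cu_def
  proof (intro exI conjI allI impI)
    show "pol (run pol phi k) = Some u" by (rule s)
    fix k' w assume k': "k' < k" and s': "pol (run pol phi k') = Some w"
    have n1: "1 \<notin> reach w phi" using min k' s' unfolding P_def by blast
    show "reach w phi \<inter> {1..u} = {}"
    proof (rule ccontr)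
      assume "reach w phi \<inter> {1..u} \<noteq> {}"
      then obtain v where v0: "v \<in> reach w phi" "v \<in> {1..u}" by blast
      then have vv: "1 \<le> v" "v \<le> u" "v \<le> w" "\<forall>j. v \<le> j \<and> j < w \<longrightarrow> phi j"
        unfolding reach_def by auto
      have "\<forall>j. 1 \<le> j \<and> j < w \<longrightarrow> phi j"
      proof (intro allI impI)
        fix j assume "1 \<le> j \<and> j < w"
        then show "phi j" using vv pu by (cases "j < v") auto
      qed
      then have "1 \<in> reach w phi" using vv by (auto simp: reach_def)
      then show False using n1 by blast
    qed
  qed
  moreover have "path u phi" using pu by (simp add: path_def)
  ultimately show ?thesis using un by blast
qed

lemma Cu_seed: "Cu pol u phi \<Longrightarrow> u \<in> seeds pol phi"
  unfolding Cu_def seeds_def by blast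

lemma main_bound:
  assumes q: "\<forall>j\<in>{1..<n}. 0 \<le> q j \<and> q j \<le> 1"
    and i: "i \<in> {1..n}"
    and v: "valid_policy n pol"
    and xs: "\<forall>k\<in>{1..n}. prob_ev n q (\<lambda>phi. k \<in> seeds pol phi) = x k"
  shows "sigma_node n q 1 pol \<le> (\<Sum>j=1..i. x j * preach n q j) + preach n q (i + 1)"
proof -
  define D where "D = (\<lambda>u phi. Cu pol u phi \<and> path u phi)"
  define F where "F = (\<lambda>phi. i < n \<and> path (i+1) phi)"
  have "sigma_node n q 1 pol \<le> prob_ev n q (\<lambda>phi. (\<exists>u\<in>{1..i}. D u phi) \<or> F phi)"
    unfolding sigma_node_def
  proof (rule prob_mono[OF q], intro ballI impI)
    fix phi assume "1 \<in> reach_set (seeds pol phi) phi"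
    then obtain u where u: "u \<in> {1..n}" "Cu pol u phi" "path u phi" using cover[OF v] by blast
    show "(\<exists>u\<in>{1..i}. D u phi) \<or> F phi"
    proof (cases "u \<le> i")
      case True then show ?thesis using u unfolding D_def by auto
    next
      case False then show ?thesis using u unfolding F_def path_def by auto
    qed
  qed
  also have "\<dots> \<le> (\<Sum>u\<in>{1..i}. prob_ev n q (D u)) + prob_ev n q F"
    by (rule prob_union[OF q]) simp
  also have "\<dots> \<le> (\<Sum>j=1..i. x j * preach n q j) + preach n q (i + 1)"
  proof (rule add_mono)
    show "(\<Sum>u\<in>{1..i}. prob_ev n q (D u)) \<le> (\<Sum>j=1..i. x j * preach n q j)"
    proof (rule sum_mono)
      fix u assume u: "u \<in> {1..i}"
      have "prob_ev n q (D u) = prob_ev n q (Cu pol u) * (\<Prod>j\<in>{1..<u}. q j)"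
        unfolding D_def
      proof (rule path_indep)
        show "u \<le> n" using u i by auto
        fix phi j b assume "j \<in> {1..<u}"
        then show "Cu pol u (phi(j:=b)) = Cu pol u phi" by (intro Cu_inv) auto
      qed
      also have "(\<Prod>j\<in>{1..<u}. q j) = preach n q u" using u i by (simp add: preach_def)
      also have "prob_ev n q (Cu pol u) \<le> x u"
        using prob_mono[OF q, of "Cu pol u" "\<lambda>phi. u \<in> seeds pol phi"] Cu_seed xs u i by auto
      moreover have "0 \<le> preach n q u" unfolding preach_def using q u i by (auto intro: prod_nonneg)
      ultimately show "prob_ev n q (D u) \<le> x u * preach n q u"
        by (metis mult_right_mono)
    qed
    show "prob_ev n q F \<le> preach n q (i + 1)"
    proof (cases "i < n")
      case True
      have "prob_ev n q F = prob_ev n q (\<lambda>phi. (\<lambda>_. True) phi \<and> path (i+1) phi)"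
        unfolding F_def using True by simp
      also have "\<dots> = prob_ev n q (\<lambda>_. True) * (\<Prod>j\<in>{1..<i+1}. q j)"
        by (rule path_indep) (use True in auto)
      also have "\<dots> = preach n q (i + 1)" using True by (simp add: mass preach_def)
      finally show ?thesis by simp
    next
      case False
      then have "F = (\<lambda>_. False)" unfolding F_def by simp
      then show ?thesis using False i by (simp add: prob_ev_def preach_def)
    qed
  qed
  finally show ?thesis .
qed

theorem lemma6:
  fixes n :: nat and q :: "nat \<Rightarrow> real" and x :: "nat \<Rightarrow> real" and i :: nat
  assumes "\<forall>j\<in>{1..<n}. 0 \<le> q j \<and> q j \<le> 1"
    and "\<forall>j\<in>{1..n}. 0 \<le> x j \<and> x j \<le> 1"
    and "i \<in> {1..n}"
  shows "fplus n q 1 x \<le> ereal ((\<Sum>j=1..i. x j * preach n q j) + preach n q (i + 1))"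
  unfolding fplus_def
proof (rule Sup_least)
  fix e assume "e \<in> {ereal (sigma_node n q 1 pol) | pol. valid_policy n pol \<and>
      (\<forall>i\<in>{1..n}. prob_ev n q (\<lambda>phi. i \<in> seeds pol phi) = x i)}"
  then obtain pol where e: "e = ereal (sigma_node n q 1 pol)" and v: "valid_policy n pol"
    and xs: "\<forall>k\<in>{1..n}. prob_ev n q (\<lambda>phi. k \<in> seeds pol phi) = x k" by blast
  show "e \<le> ereal ((\<Sum>j=1..i. x j * preach n q j) + preach n q (i + 1))"
    using main_bound[OF assms(1) assms(3) v xs] e by simp
qed

end
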